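(* Fix $0\le i\le n-1$, let $\kappa(p)=1\vee p$ and $\lambda(m)=1\vee m$, and define on $[t_i,t_{i+1})\times\mathbb R^{n-i}\times\mathbb R$ (restricted to arguments where the logarithms are defined) $$\phi(t,p_{i+1},\dots,p_n,m)=e^{t_{i+1}-t}\Big(1+\sum_{k=i+1}^n\ln(1+p_k)+\ln(1+m)\Big).$$ Let $v$ be a lower semi-continuous viscosity super-solution of $\sup_{(u,b)\in U\times\mathcal S_{d(n-i)+d}}\mathrm H^{u,b}_{\kappa,\lambda}v=0$ on $\mathrm{int}(\mathscr D_i)$. Then for every $\xi>0$ the function $v+\xi\phi$ satisfies, in the viscosity sense on $\mathrm{int}(\mathscr D_i)$, $$\sup_{(u,b)\in U\times\mathcal S_{d(n-i)+d}}\mathrm H^{u,b}_{\kappa,\lambda}(v+\xi\phi)\ge\frac{\xi}{8}.$$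
   Context: Setting. Fix integers $d,n\ge1$, $T>0$, a compact $U\subset\mathbb R^d$, and continuous $\mu:[0,T]\times\mathbb R^d\times U\to\mathbb R^d$, $\sigma:[0,T]\times\mathbb R^d\times U\to\mathbb R^{d\times d}$, Lipschitz in $z$ with linear growth in $z$ uniformly in $(t,u)$. Fix $0=t_0\le\dots\le t_n=T$; for $0\le i\le n-1$, $\mathscr C_i=[t_i,t_{i+1})\times\mathbb R^d\times\mathbb R^{n-i}$ and $\mathrm{int}(\mathscr D_i)=[t_i,t_{i+1})\times\mathbb R^d\times(0,\infty)^{n-i}\times(0,\infty)$. Here $\phi$ depends only on $(t,p,m)$ and is viewed as a function of $(t,z,p,m)$. Operators. For $\Theta=(t,z,p_{i+1},\dots,p_n,m,q,A)$ with $(t,z,p,m)\in\mathscr C_i\times\mathbb R$, $q=(q^z,q^{p_{i+1}},\dots,q^{p_n},q^m)\in\mathbb R^d\times\mathbb R^{n-i}\times\mathbb R$ and $A\in\mathbb S^{d+n-i+1}$ in blocks along $(z,p_{i+1},\dots,p_n,m)$: $A^{zz}\in\mathbb S^d$, $A^{zp_k},A^{zm}\in\mathbb R^d$, scalars $A^{p_kp_k},A^{p_km},A^{mm}$. For $u\in U$, $a=(a_{i+1},\dots,a_n)\in(\mathbb R^d)^{n-i}$, $e\in\mathbb R^d$, with $\mu=\mu(t,z,u)$, $\sigma=\sigma(t,z,u)$: $\mathrm L^{u,a,e}_{\kappa,\lambda}(\Theta)=-\mu^\top q^z-\tfrac12\mathrm{Tr}[\sigma\sigma^\top A^{zz}]-\lambda(m)e^\top\sigma^\top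 A^{zm}-\sum_k\kappa(p_k)a_k^\top\sigma^\top A^{zp_k}$, $\mathrm F^{a,e}_{\kappa,\lambda}(\Theta)=-\tfrac12\lambda(m)^2|e|^2A^{mm}-\tfrac12\sum_k\kappa(p_k)^2|a_k|^2A^{p_kp_k}-\lambda(m)\sum_k\kappa(p_k)e^\top a_kA^{p_km}$ (sums over $k=i+1,\dots,n$). $\mathcal S_{d(n-i)+d}$ is the unit sphere of $\mathbb R^{1+d(n-i)+d}$; $b=(b_1,b^\flat_{i+1},\dots,b^\flat_n,b^\sharp)$, $b^\flat=(b^\flat_{i+1},\dots,b^\flat_n)$. For $c\in\mathbb R$: if $b_1\neq0$, $\mathrm H^{u,b}_{\kappa,\lambda}(\Theta,c)=b_1^2(-c+\mathrm L^{u,b^\flat/b_1,b^\sharp/b_1}_{\kappa,\lambda}(\Theta)+\mathrm F^{b^\flat/b_1,b^\sharp/b_1}_{\kappa,\lambda}(\Theta))$; if $b_1=0$, $\mathrm H^{u,b}_{\kappa,\lambda}(\Theta,c)=\mathrm F^{b^\flat,b^\sharp}_{\kappa,\lambda}(\Theta)$. For smooth $\varphi$, $\mathrm H^{u,b}_{\kappa,\lambda}\varphi(x)=\mathrm H^{u,b}_{\kappa,\lambda}(x,\mathrm D\varphi(x),\mathrm D^2\varphi(x),\partial_t\varphi(x))$ with $\mathrm D,\mathrm D^2$ in $(z,p,m)$. Viscosity sense: a lower semi-continuous $g$ satisfies $\sup_{(u,b)}\mathrm H^{u,b}_{\kappa,\lambda}g\ge\gamma$ on $\mathrm{int}(\mathscr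 D_i)$ in the viscosity sense if for every $x_0\in\mathrm{int}(\mathscr D_i)$ and smooth $\varphi$ such that $g-\varphi$ attains a (strict) minimum over $\mathrm{int}(\mathscr D_i)$ equal to $0$ at $x_0$, $\sup_{(u,b)}\mathrm H^{u,b}_{\kappa,\lambda}\varphi(x_0)\ge\gamma$; a super-solution is the case $\gamma=0$. *)

theory Defs
  imports "HOL-Analysis.Analysis"
begin

text \<open>Spatial variable y = (z, p, m) with z in R^d (index type 'd), p = (p_(i+1),...,p_n)
 in R^(n-i) (index type 'k, CARD('k) = n - i) and m real.
 The gradient q in the (z,p,m) variables is represented as a linear functional on
 real^'d * real^'k * real, the symmetric matrix A as a bilinear form on that space;
 its blocks are A applied to the corresponding coordinate directions.\<close>

definition Lop ::
  "(real \<Rightarrow> real^'d \<Rightarrow> real^'d \<Rightarrow> real^'d) \<Rightarrow> (real \<Rightarrow> real^'d \<Rightarrow> real^'d \<Rightarrow> real^'d^'d)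
   \<Rightarrow> (real \<Rightarrow> real) \<Rightarrow> (real \<Rightarrow> real)
   \<Rightarrow> real \<Rightarrow> real^'d \<Rightarrow> real^'k \<Rightarrow> real
   \<Rightarrow> ((real^'d) \<times> (real^'k) \<times> real \<Rightarrow> real)
   \<Rightarrow> ((real^'d) \<times> (real^'k) \<times> real \<Rightarrow> (real^'d) \<times> (real^'k) \<times> real \<Rightarrow> real)
   \<Rightarrow> real^'d \<Rightarrow> (real^'d)^'k \<Rightarrow> real^'d \<Rightarrow> real" where
  "Lop mu sig kap lam t z p m q A u a e =
     - q (mu t z u, 0, 0)
     - (1/2) * (\<Sum>j\<in>UNIV. A (sig t z u *v axis j 1, 0, 0) (sig t z u *v axis j 1, 0, 0))
     - lam m * A (sig t z u *v e, 0, 0) (0, 0, 1)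
     - (\<Sum>k\<in>UNIV. kap (p $ k) * A (sig t z u *v (a $ k), 0, 0) (0, axis k 1, 0))"

definition Fop ::
  "(real \<Rightarrow> real) \<Rightarrow> (real \<Rightarrow> real) \<Rightarrow> real^'k \<Rightarrow> real
   \<Rightarrow> ((real^'d) \<times> (real^'k) \<times> real \<Rightarrow> (real^'d) \<times> (real^'k) \<times> real \<Rightarrow> real)
   \<Rightarrow> (real^'d)^'k \<Rightarrow> real^'d \<Rightarrow> real" where
  "Fop kap lam p m A a e =
     - (1/2) * (lam m)^2 * (norm e)^2 * A (0, 0, 1) (0, 0, 1)
     - (1/2) * (\<Sum>k\<in>UNIV. (kap (p $ k))^2 * (norm (a $ k))^2 * A (0, axis k 1, 0) (0, axis k 1, 0))
     - lam m * (\<Sum>k\<in>UNIV. kap (p $ k) * (e \<bullet> (a $ k)) * A (0, axis k 1, 0) (0, 0, 1))"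

definition Hop ::
  "(real \<Rightarrow> real^'d \<Rightarrow> real^'d \<Rightarrow> real^'d) \<Rightarrow> (real \<Rightarrow> real^'d \<Rightarrow> real^'d \<Rightarrow> real^'d^'d)
   \<Rightarrow> (real \<Rightarrow> real) \<Rightarrow> (real \<Rightarrow> real)
   \<Rightarrow> real \<Rightarrow> real^'d \<Rightarrow> real^'k \<Rightarrow> real
   \<Rightarrow> ((real^'d) \<times> (real^'k) \<times> real \<Rightarrow> real)
   \<Rightarrow> ((real^'d) \<times> (real^'k) \<times> real \<Rightarrow> (real^'d) \<times> (real^'k) \<times> real \<Rightarrow> real)
   \<Rightarrow> real \<Rightarrow> real^'d \<Rightarrow> real \<times> ((real^'d)^'k) \<times> (real^'d) \<Rightarrow> real" where
  "Hop mu sig kap lam t z p m q A c u b =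
     (let b1 = fst b; bf = fst (snd b); bs = snd (snd b) in
      if b1 \<noteq> 0 then
        b1^2 * (- c + Lop mu sig kap lam t z p m q A u ((1/b1) *\<^sub>R bf) ((1/b1) *\<^sub>R bs)
                    + Fop kap lam p m A ((1/b1) *\<^sub>R bf) ((1/b1) *\<^sub>R bs))
      else Fop kap lam p m A bf bs)"

definition C2_on ::
  "'a::real_normed_vector set \<Rightarrow> ('a \<Rightarrow> real) \<Rightarrow> ('a \<Rightarrow> 'a \<Rightarrow>\<^sub>L real)
   \<Rightarrow> ('a \<Rightarrow> 'a \<Rightarrow>\<^sub>L ('a \<Rightarrow>\<^sub>L real)) \<Rightarrow> bool" where
  "C2_on W f Df D2f \<longleftrightarrow> open W \<and>
     (\<forall>x\<in>W. (f has_derivative blinfun_apply (Df x)) (at x) \<and>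
            (Df has_derivative blinfun_apply (D2f x)) (at x)) \<and>
     continuous_on W D2f"

definition lsc_on :: "'a::metric_space set \<Rightarrow> ('a \<Rightarrow> real) \<Rightarrow> bool" where
  "lsc_on S g \<longleftrightarrow> (\<forall>x\<in>S. \<forall>e>0. \<exists>\<delta>>0. \<forall>y\<in>S. dist y x < \<delta> \<longrightarrow> g x - e < g y)"

text \<open>sup over (u,b) in U x unit sphere of H^{u,b} g >= gamma on Dom in the viscosity sense.
 For a test function phi at x0 = (t,(z,p,m)): gradient / Hessian in (z,p,m), c = d/dt phi.\<close>
definition visc_sup_ge ::
  "(real \<Rightarrow> real^'d \<Rightarrow> real^'d \<Rightarrow> real^'d) \<Rightarrow> (real \<Rightarrow> real^'d \<Rightarrow> real^'d \<Rightarrow> real^'d^'d)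
   \<Rightarrow> (real^'d) set \<Rightarrow> (real \<Rightarrow> real) \<Rightarrow> (real \<Rightarrow> real)
   \<Rightarrow> (real \<times> (real^'d) \<times> (real^'k) \<times> real) set
   \<Rightarrow> (real \<times> (real^'d) \<times> (real^'k) \<times> real \<Rightarrow> real) \<Rightarrow> real \<Rightarrow> bool" where
  "visc_sup_ge mu sig U kap lam Dom g \<gamma> \<longleftrightarrow>
     (\<forall>x0\<in>Dom. \<forall>W \<phi> D\<phi> D2\<phi>.
        C2_on W \<phi> D\<phi> D2\<phi> \<and> Dom \<subseteq> W \<and> g x0 - \<phi> x0 = 0 \<and>
        (\<forall>x\<in>Dom. g x0 - \<phi> x0 \<le> g x - \<phi> x) \<longrightarrow>
        ereal \<gamma> \<le> (SUP ub \<in> U \<times> sphere (0 :: real \<times> ((real^'d)^'k) \<times> (real^'d)) 1.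
           ereal (Hop mu sig kap lam (fst x0) (fst (snd x0)) (fst (snd (snd x0))) (snd (snd (snd x0)))
                    (\<lambda>w. blinfun_apply (D\<phi> x0) (0, w))
                    (\<lambda>w w'. blinfun_apply (blinfun_apply (D2\<phi> x0) (0, w)) (0, w'))
                    (blinfun_apply (D\<phi> x0) (1, 0))
                    (fst ub) (snd ub))))"

definition intD :: "(nat \<Rightarrow> real) \<Rightarrow> nat \<Rightarrow> (real \<times> (real^'d) \<times> (real^'k) \<times> real) set" where
  "intD tg i = {(t, z, p, m). tg i \<le> t \<and> t < tg (Suc i) \<and> (\<forall>k. 0 < p $ k) \<and> 0 < m}"

definition phi0 :: "(nat \<Rightarrow> real) \<Rightarrow> nat \<Rightarrow> real \<times> (real^'d) \<times> (real^'k) \<times> real \<Rightarrow> real" where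
  "phi0 tg i x = (case x of (t, z, p, m) \<Rightarrow>
     exp (tg (Suc i) - t) * (1 + (\<Sum>k\<in>UNIV. ln (1 + p $ k)) + ln (1 + m)))"

end

theory Submission
  imports Defs
begin


lemma normsq_vec: "(norm (x::'a::real_normed_vector^'n))^2 = (\<Sum>k\<in>UNIV. (norm (x$k))^2)"
  unfolding norm_vec_def L2_set_def by (simp add: sum_nonneg)

lemma normsq_prod: "(norm (a,b))^2 = (norm a)^2 + (norm b)^2"
  unfolding norm_prod_def by (simp add: add_nonneg_nonneg)

lemma maxq: "(x::real) > 0 \<Longrightarrow> E \<ge> 0 \<Longrightarrow> E/4 \<le> (max 1 x)^2 * E / (1+x)^2"
proof -
  assume x: "x > 0" "E \<ge> 0"
  have "(1+x)^2 \<le> 4 * (max 1 x)^2"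
  proof -
    have "1 + x \<le> 2 * max 1 x" by simp
    hence "(1+x)^2 \<le> (2 * max 1 x)^2" using x by (intro power_mono) auto
    thus ?thesis by (simp add: power_mult_distrib)
  qed
  hence "E * (1+x)^2 \<le> E * (4 * (max 1 x)^2)" using x by (intro mult_left_mono) auto
  thus ?thesis using x by (simp add: field_simps)
qed

definition q0 :: "real \<Rightarrow> real^'k \<Rightarrow> real \<Rightarrow> (real^'d) \<times> (real^'k) \<times> real \<Rightarrow> real" where
  "q0 E p m w = (\<Sum>k\<in>UNIV. (E/(1+p$k)) * (fst (snd w) $ k)) + E/(1+m) * snd (snd w)"

definition A0 :: "real \<Rightarrow> real^'k \<Rightarrow> real \<Rightarrow> (real^'d) \<times> (real^'k) \<times> real \<Rightarrow> (real^'d) \<times> (real^'k) \<times> real \<Rightarrow> real" where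
  "A0 E p m w w' = - (\<Sum>k\<in>UNIV. E/(1+p$k)^2 * (fst (snd w) $ k) * (fst (snd w') $ k))
       - E/(1+m)^2 * snd (snd w) * snd (snd w')"

lemma Fop_bound:
  fixes p :: "real^'k"
  assumes E: "E \<ge> 0" and p: "\<forall>k. p$k > 0" and m: "m > 0"
  shows "E/8 * ((norm e)^2 + (\<Sum>k\<in>UNIV. (norm (a$k))^2)) \<le>
     Fop (\<lambda>p. max 1 p) (\<lambda>m. max 1 m) p m (A0 E p m :: _ \<Rightarrow> _ \<Rightarrow> real) a (e::real^'d)"
proof -
  have ax: "\<And>k j. axis k (1::real) $ j = (if j = k then 1 else 0)"
    by (simp add: axis_def)
  have F: "Fop (\<lambda>p. max 1 p) (\<lambda>m. max 1 m) p m (A0 E p m :: _ \<Rightarrow> _ \<Rightarrow> real) a e =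
     (1/2) * ((norm e)^2 * ((max 1 m)^2 * E / (1+m)^2))
     + (1/2) * (\<Sum>k\<in>UNIV. (norm (a$k))^2 * ((max 1 (p$k))^2 * E / (1+p$k)^2))"
  proof -
    have a1: "A0 E p m (0::real^'d, 0, 1) (0, 0, 1) = - E/(1+m)^2" by (simp add: A0_def)
    have a2: "\<And>k. A0 E p m (0::real^'d, axis k 1, 0) (0, axis k 1, 0) = - E/(1+p$k)^2"
      by (simp add: A0_def ax if_distrib cong: if_cong)
    have a3: "\<And>k. A0 E p m (0::real^'d, axis k 1, 0) (0, 0, 1) = 0"
      by (simp add: A0_def)
    show ?thesis unfolding Fop_def a1 a2 a3
      by (simp add: sum_negf algebra_simps)
  qed
  have 1: "(norm e)^2 * (E/4) \<le> (norm e)^2 * ((max 1 m)^2 * E / (1+m)^2)"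
    by (intro mult_left_mono maxq m E) auto
  have 2: "(\<Sum>k\<in>UNIV. (norm (a$k))^2 * (E/4)) \<le> (\<Sum>k\<in>UNIV. (norm (a$k))^2 * ((max 1 (p$k))^2 * E / (1+p$k)^2))"
    by (intro sum_mono mult_left_mono maxq p[rule_format] E) auto
  have 3: "(\<Sum>k\<in>UNIV. (norm (a$k))^2 * (E/4)) = (\<Sum>k\<in>UNIV. (norm (a$k))^2) * (E/4)"
    by (simp add: sum_distrib_right)
  have 4: "E/8 * ((norm e)^2 + (\<Sum>k\<in>UNIV. (norm (a$k))^2)) = ((norm e)^2 * (E/4) + (\<Sum>k\<in>UNIV. (norm (a$k))^2) * (E/4))/2"
    by (simp add: algebra_simps)
  have 5: "\<And>a b A B::real. a \<le> A \<Longrightarrow> b \<le> B \<Longrightarrow> (a+b)/2 \<le> 1/2*A + 1/2*B" by simp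
  show ?thesis unfolding F 4 by (rule 5[OF 1 2[unfolded 3]])
qed

lemma Lop0:
  fixes p :: "real^'k"
  shows "Lop mu sig kap lam t z p m (q0 E p m) (A0 E p m :: (real^'d) \<times> (real^'k) \<times> real \<Rightarrow> _) u a e = 0"
  unfolding Lop_def q0_def A0_def by simp


lemma H0_bound:
  fixes p :: "real^'k" and b :: "real \<times> ((real^'d)^'k) \<times> (real^'d)"
  assumes E: "E \<ge> 1" and s: "s \<ge> 1" and p: "\<forall>k. p$k > 0" and m: "m > 0" and nb: "norm b = 1"
  shows "1/8 \<le> Hop mu sig (\<lambda>p. max 1 p) (\<lambda>m. max 1 m) t z p m (q0 E p m) (A0 E p m) (- (E * s)) u b"
proof -
  obtain b1 bf bs where b: "b = (b1, bf, bs)" by (cases b) auto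
  have nn: "b1^2 + ((norm bs)^2 + (\<Sum>k\<in>UNIV. (norm (bf$k))^2)) = 1"
  proof -
    have "(norm b)^2 = 1" using nb by simp
    hence "b1^2 + ((norm bf)^2 + (norm bs)^2) = 1" unfolding b normsq_prod by simp
    thus ?thesis unfolding normsq_vec[of bf] by (simp add: add_ac)
  qed
  show ?thesis
  proof (cases "b1 = 0")
    case True
    have "E/8 * ((norm bs)^2 + (\<Sum>k\<in>UNIV. (norm (bf$k))^2)) \<le> Fop (\<lambda>p. max 1 p) (\<lambda>m. max 1 m) p m (A0 E p m) bf bs"
      by (rule Fop_bound) (use E p m in auto)
    moreover have "E/8 * ((norm bs)^2 + (\<Sum>k\<in>UNIV. (norm (bf$k))^2)) = E/8" using nn True by simp
    ultimately show ?thesis using True E unfolding b Hop_def by simp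
  next
    case False
    let ?a = "(1/b1) *\<^sub>R bf" and ?e = "(1/b1) *\<^sub>R bs"
    have F: "E/8 * ((norm ?e)^2 + (\<Sum>k\<in>UNIV. (norm (?a$k))^2)) \<le> Fop (\<lambda>p. max 1 p) (\<lambda>m. max 1 m) p m (A0 E p m) ?a ?e"
      by (rule Fop_bound) (use E p m in auto)
    have eq: "b1^2 * (E/8 * ((norm ?e)^2 + (\<Sum>k\<in>UNIV. (norm (?a$k))^2))) = E/8 * (1 - b1^2)"
    proof -
      have "b1^2 * ((norm ?e)^2 + (\<Sum>k\<in>UNIV. (norm (?a$k))^2)) = (norm bs)^2 + (\<Sum>k\<in>UNIV. (norm (bf$k))^2)"
      proof -
        have x1: "b1^2 * (norm ?e)^2 = (norm bs)^2" using False by (simp add: power_mult_distrib power_divide)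
        have x2: "b1^2 * (\<Sum>k\<in>UNIV. (norm (?a$k))^2) = (\<Sum>k\<in>UNIV. (norm (bf$k))^2)"
          unfolding sum_distrib_left by (rule sum.cong) (use False in \<open>auto simp: power_mult_distrib power_divide\<close>)
        show ?thesis using x1 x2 by (simp add: distrib_left)
      qed
      moreover have "(norm bs)^2 + (\<Sum>k\<in>UNIV. (norm (bf$k))^2) = 1 - b1^2" using nn by linarith
      moreover have "b1^2 * (E/8 * ((norm ?e)^2 + (\<Sum>k\<in>UNIV. (norm (?a$k))^2))) = E/8 * (b1^2 * ((norm ?e)^2 + (\<Sum>k\<in>UNIV. (norm (?a$k))^2)))"
        by (simp only: mult.left_commute)
      ultimately show ?thesis by simp
    qed
    have H: "Hop mu sig (\<lambda>p. max 1 p) (\<lambda>m. max 1 m) t z p m (q0 E p m) (A0 E p m) (- (E * s)) u b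
       = b1^2 * (E * s + Fop (\<lambda>p. max 1 p) (\<lambda>m. max 1 m) p m (A0 E p m) ?a ?e)"
      unfolding b Hop_def using False by (simp add: Lop0)
    have "b1^2 * (E/8 * ((norm ?e)^2 + (\<Sum>k\<in>UNIV. (norm (?a$k))^2))) \<le> b1^2 * Fop (\<lambda>p. max 1 p) (\<lambda>m. max 1 m) p m (A0 E p m) ?a ?e"
      by (rule mult_left_mono[OF F]) simp
    hence 1: "E/8 * (1 - b1^2) \<le> b1^2 * Fop (\<lambda>p. max 1 p) (\<lambda>m. max 1 m) p m (A0 E p m) ?a ?e" using eq by (simp only:)
    have b1le: "b1^2 \<le> 1" using nn proof -
      have "0 \<le> (norm bs)^2 + (\<Sum>k\<in>UNIV. (norm (bf$k))^2)" by (intro add_nonneg_nonneg sum_nonneg) auto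
      thus ?thesis using nn by linarith
    qed
    have 2: "1 * (1 - b1^2) \<le> E * (1 - b1^2)" using E b1le by (intro mult_right_mono) auto
    have 2: "(1 - b1^2)/8 \<le> E/8 * (1 - b1^2)" using 2 by simp
    have 3: "b1^2 \<le> b1^2 * (E * s)" proof -
      have "1 * 1 \<le> E * s" using E s by (intro mult_mono) auto
      hence "b1^2 * 1 \<le> b1^2 * (E * s)" by (intro mult_left_mono) auto
      thus ?thesis by simp
    qed
    have ar: "a \<le> F \<Longrightarrow> c \<le> a \<Longrightarrow> x \<le> y \<Longrightarrow> 0 \<le> x \<Longrightarrow> c = (1 - x)/8 \<Longrightarrow> 1/8 \<le> y + F"
      for a F c x y :: real by simp
    show ?thesis unfolding H distrib_left by (rule ar[OF 1 2 3 zero_le_power2[of b1] refl])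
  qed
qed




definition lt :: "(real \<times> (real^'d) \<times> (real^'k) \<times> real) \<Rightarrow>\<^sub>L real" where "lt = Blinfun fst"
definition lpk :: "'k \<Rightarrow> (real \<times> (real^'d) \<times> (real^'k) \<times> real) \<Rightarrow>\<^sub>L real" where "lpk k = Blinfun (\<lambda>x. fst (snd (snd x)) $ k)"
definition lmm :: "(real \<times> (real^'d) \<times> (real^'k) \<times> real) \<Rightarrow>\<^sub>L real" where "lmm = Blinfun (\<lambda>x. snd (snd (snd x)))"
definition rk1 :: "(real \<times> (real^'d) \<times> (real^'k) \<times> real) \<Rightarrow>\<^sub>L real \<Rightarrow> (real \<times> (real^'d) \<times> (real^'k) \<times> real) \<Rightarrow>\<^sub>L real \<Rightarrow> (real \<times> (real^'d) \<times> (real^'k) \<times> real) \<Rightarrow>\<^sub>L ((real \<times> (real^'d) \<times> (real^'k) \<times> real) \<Rightarrow>\<^sub>L real)"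
  where "rk1 a b = Blinfun (\<lambda>h. blinfun_apply a h *\<^sub>R b)"

lemma lt_apply[simp]: "blinfun_apply lt (x::(real \<times> (real^'d) \<times> (real^'k) \<times> real)) = fst x"
  unfolding lt_def by (simp add: bounded_linear_Blinfun_apply bounded_linear_fst)
lemma lpk_apply[simp]: "blinfun_apply (lpk k) (x::(real \<times> (real^'d) \<times> (real^'k) \<times> real)) = fst (snd (snd x)) $ k"
proof -
  have "bounded_linear (\<lambda>x::(real \<times> (real^'d) \<times> (real^'k) \<times> real). fst (snd (snd x)) $ k)"
    by (intro bounded_linear_compose[OF bounded_linear_vec_nth] bounded_linear_intros)
  thus ?thesis unfolding lpk_def by (simp add: bounded_linear_Blinfun_apply)
qed
lemma lmm_apply[simp]: "blinfun_apply lmm (x::(real \<times> (real^'d) \<times> (real^'k) \<times> real)) = snd (snd (snd x))"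
proof -
  have "bounded_linear (\<lambda>x::(real \<times> (real^'d) \<times> (real^'k) \<times> real). snd (snd (snd x)))"
    by (intro bounded_linear_intros)
  thus ?thesis unfolding lmm_def by (simp add: bounded_linear_Blinfun_apply)
qed
lemma rk1_apply[simp]: "blinfun_apply (rk1 a b) (h::(real \<times> (real^'d) \<times> (real^'k) \<times> real)) = blinfun_apply a h *\<^sub>R b"
proof -
  have "bounded_linear (\<lambda>h. blinfun_apply a h *\<^sub>R b)"
    by (intro bounded_linear_intros)
  thus ?thesis unfolding rk1_def by (simp add: bounded_linear_Blinfun_apply)
qed

lemma bl_P: "bounded_linear (\<lambda>x::(real \<times> (real^'d) \<times> (real^'k) \<times> real). fst (snd (snd x)) $ k)"
  by (intro bounded_linear_compose[OF bounded_linear_vec_nth] bounded_linear_intros)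
lemma bl_M: "bounded_linear (\<lambda>x::(real \<times> (real^'d) \<times> (real^'k) \<times> real). snd (snd (snd x)))"
  by (intro bounded_linear_intros)

lemma rk1_add: "rk1 (a + a') b = rk1 a b + rk1 a' b"
  by (rule blinfun_eqI) (simp add: blinfun.add_left scaleR_add_left)
lemma rk1_diff: "rk1 (a - a') b = rk1 a b - rk1 a' b"
  by (rule blinfun_eqI) (simp add: blinfun.diff_left scaleR_diff_left)
lemma rk1_scaleR: "rk1 (r *\<^sub>R a) b = r *\<^sub>R rk1 a b"
  by (rule blinfun_eqI) (simp add: blinfun.scaleR_left)
lemma rk1_sum: "rk1 (\<Sum>k\<in>S. f k) b = (\<Sum>k\<in>S. rk1 (f k) b)"
  by (rule blinfun_eqI) (simp add: blinfun.sum_left scaleR_sum_left)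

definition Ef :: "real \<Rightarrow> (real \<times> (real^'d) \<times> (real^'k) \<times> real) \<Rightarrow> real" where "Ef c x = exp (c - fst x)"
definition sf :: "(real \<times> (real^'d) \<times> (real^'k) \<times> real) \<Rightarrow> real" where
  "sf x = 1 + (\<Sum>k\<in>UNIV. ln (1 + fst (snd (snd x)) $ k)) + ln (1 + snd (snd (snd x)))"

lemma phi0_eq: "phi0 tg i x = Ef (tg (Suc i)) x * sf x"
  by (cases x) (simp add: phi0_def Ef_def sf_def)

definition Dphi :: "real \<Rightarrow> (real \<times> (real^'d) \<times> (real^'k) \<times> real) \<Rightarrow> (real \<times> (real^'d) \<times> (real^'k) \<times> real) \<Rightarrow>\<^sub>L real" where
  "Dphi c x = (- (Ef c x * sf x)) *\<^sub>R lt + (\<Sum>k\<in>UNIV. (Ef c x / (1 + fst (snd (snd x)) $ k)) *\<^sub>R lpk k)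
     + (Ef c x / (1 + snd (snd (snd x)))) *\<^sub>R lmm"

definition Ga :: "real \<Rightarrow> (real \<times> (real^'d) \<times> (real^'k) \<times> real) \<Rightarrow> (real \<times> (real^'d) \<times> (real^'k) \<times> real) \<Rightarrow>\<^sub>L real" where
  "Ga c x = (Ef c x * sf x) *\<^sub>R lt - (\<Sum>k\<in>UNIV. (Ef c x / (1 + fst (snd (snd x)) $ k)) *\<^sub>R lpk k)
     - (Ef c x / (1 + snd (snd (snd x)))) *\<^sub>R lmm"
definition Gb :: "real \<Rightarrow> (real \<times> (real^'d) \<times> (real^'k) \<times> real) \<Rightarrow> 'k \<Rightarrow> (real \<times> (real^'d) \<times> (real^'k) \<times> real) \<Rightarrow>\<^sub>L real" where
  "Gb c x k = (- (Ef c x / (1 + fst (snd (snd x)) $ k))) *\<^sub>R lt - (Ef c x / (1 + fst (snd (snd x)) $ k)^2) *\<^sub>R lpk k"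
definition Gc :: "real \<Rightarrow> (real \<times> (real^'d) \<times> (real^'k) \<times> real) \<Rightarrow> (real \<times> (real^'d) \<times> (real^'k) \<times> real) \<Rightarrow>\<^sub>L real" where
  "Gc c x = (- (Ef c x / (1 + snd (snd (snd x))))) *\<^sub>R lt - (Ef c x / (1 + snd (snd (snd x)))^2) *\<^sub>R lmm"

definition D2phi :: "real \<Rightarrow> (real \<times> (real^'d) \<times> (real^'k) \<times> real) \<Rightarrow> (real \<times> (real^'d) \<times> (real^'k) \<times> real) \<Rightarrow>\<^sub>L ((real \<times> (real^'d) \<times> (real^'k) \<times> real) \<Rightarrow>\<^sub>L real)" where
  "D2phi c x = rk1 (Ga c x) lt + (\<Sum>k\<in>UNIV. rk1 (Gb c x k) (lpk k)) + rk1 (Gc c x) lmm"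

lemma Ef_deriv: fixes x :: "(real \<times> (real^'d) \<times> (real^'k) \<times> real)"
  shows "((Ef c) has_derivative (\<lambda>h. - (Ef c x * fst h))) (at x)"
proof -
  have "((\<lambda>x::(real \<times> (real^'d) \<times> (real^'k) \<times> real). exp (c - fst x)) has_derivative (\<lambda>h. (0 - fst h) * exp (c - fst x))) (at x)"
    by (intro has_derivative_exp has_derivative_diff has_derivative_const has_derivative_fst has_derivative_ident)
  thus ?thesis unfolding Ef_def by (rule has_derivative_eq_rhs) (auto simp: fun_eq_iff)
qed

lemma lnP_deriv: fixes x :: "(real \<times> (real^'d) \<times> (real^'k) \<times> real)"
   assumes "fst (snd (snd x)) $ k > -1"
  shows "((\<lambda>x::(real \<times> (real^'d) \<times> (real^'k) \<times> real). ln (1 + fst (snd (snd x)) $ k)) has_derivative (\<lambda>h. fst (snd (snd h)) $ k / (1 + fst (snd (snd x)) $ k))) (at x)"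
proof -
  have "((\<lambda>x::(real \<times> (real^'d) \<times> (real^'k) \<times> real). ln (1 + fst (snd (snd x)) $ k)) has_derivative (\<lambda>h. (0 + fst (snd (snd h)) $ k) * inverse (1 + fst (snd (snd x)) $ k))) (at x)"
    using assms by (intro has_derivative_ln has_derivative_add has_derivative_const bounded_linear.has_derivative[OF bl_P]) auto
  thus ?thesis by (rule has_derivative_eq_rhs) (auto simp: fun_eq_iff divide_inverse)
qed

lemma lnM_deriv: fixes x :: "(real \<times> (real^'d) \<times> (real^'k) \<times> real)"
   assumes "snd (snd (snd x)) > -1"
  shows "((\<lambda>x::(real \<times> (real^'d) \<times> (real^'k) \<times> real). ln (1 + snd (snd (snd x)))) has_derivative (\<lambda>h. snd (snd (snd h)) / (1 + snd (snd (snd x))))) (at x)"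
proof -
  have "((\<lambda>x::(real \<times> (real^'d) \<times> (real^'k) \<times> real). ln (1 + snd (snd (snd x)))) has_derivative (\<lambda>h. (0 + snd (snd (snd h))) * inverse (1 + snd (snd (snd x))))) (at x)"
    using assms by (intro has_derivative_ln has_derivative_add has_derivative_const bounded_linear.has_derivative[OF bl_M]) auto
  thus ?thesis by (rule has_derivative_eq_rhs) (auto simp: fun_eq_iff divide_inverse)
qed

lemma sf_deriv: fixes x :: "(real \<times> (real^'d) \<times> (real^'k) \<times> real)"
   assumes "\<forall>k. fst (snd (snd x)) $ k > -1" "snd (snd (snd x)) > -1"
  shows "(sf has_derivative (\<lambda>h. (\<Sum>k\<in>UNIV. fst (snd (snd h)) $ k / (1 + fst (snd (snd x)) $ k)) + snd (snd (snd h)) / (1 + snd (snd (snd x))))) (at x)"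
proof -
  have "((\<lambda>x::(real \<times> (real^'d) \<times> (real^'k) \<times> real). 1 + (\<Sum>k\<in>UNIV. ln (1 + fst (snd (snd x)) $ k)) + ln (1 + snd (snd (snd x)))) has_derivative
     (\<lambda>h. 0 + (\<Sum>k\<in>UNIV. fst (snd (snd h)) $ k / (1 + fst (snd (snd x)) $ k)) + snd (snd (snd h)) / (1 + snd (snd (snd x))))) (at x)"
    using assms by (intro has_derivative_add has_derivative_const has_derivative_sum lnP_deriv lnM_deriv) auto
  thus ?thesis unfolding sf_def[abs_def] by simp
qed

lemma phi_deriv: fixes x :: "(real \<times> (real^'d) \<times> (real^'k) \<times> real)"
   assumes "\<forall>k. fst (snd (snd x)) $ k > -1" "snd (snd (snd x)) > -1"
  shows "((\<lambda>x. Ef c x * sf x) has_derivative blinfun_apply (Dphi c x)) (at x)"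
proof -
  have "((\<lambda>x. Ef c x * sf x) has_derivative (\<lambda>h. Ef c x * ((\<Sum>k\<in>UNIV. fst (snd (snd h)) $ k / (1 + fst (snd (snd x)) $ k)) + snd (snd (snd h)) / (1 + snd (snd (snd x))))
       + (- (Ef c x * fst h)) * sf x)) (at x)"
    by (rule has_derivative_mult[OF Ef_deriv sf_deriv[OF assms]])
  thus ?thesis
    by (rule has_derivative_eq_rhs)
       (simp add: fun_eq_iff Dphi_def blinfun.add_left blinfun.sum_left blinfun.scaleR_left blinfun.minus_left blinfun.diff_left,
        simp add: distrib_left sum_distrib_left algebra_simps)
qed


lemma scaleR_rk1_deriv:
  assumes "(f has_derivative blinfun_apply g) F"
  shows "((\<lambda>x. f x *\<^sub>R l) has_derivative blinfun_apply (rk1 g l)) F"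
  using has_derivative_scaleR_left[OF assms, of l]
  by (rule has_derivative_eq_rhs) (simp add: fun_eq_iff)

lemma Ga_eq: "Ga c x = - Dphi c x"
  unfolding Ga_def Dphi_def by (simp add: algebra_simps)

lemma a_deriv: fixes x :: "(real \<times> (real^'d) \<times> (real^'k) \<times> real)"
  assumes "\<forall>k. fst (snd (snd x)) $ k > -1" "snd (snd (snd x)) > -1"
  shows "((\<lambda>x. - (Ef c x * sf x)) has_derivative blinfun_apply (Ga c x)) (at x)"
  using has_derivative_minus[OF phi_deriv[OF assms]]
  by (rule has_derivative_eq_rhs) (simp add: fun_eq_iff Ga_eq blinfun.minus_left)

lemma quot_aux: "g \<noteq> 0 \<Longrightarrow> (- (E * a) * g - E * (0 + b)) / (g * g) = (- (E / g)) *\<^sub>R a - (E / g^2) *\<^sub>R b"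
  for g E a b :: real by (simp add: field_simps power2_eq_square)

lemma b_deriv: fixes x :: "(real \<times> (real^'d) \<times> (real^'k) \<times> real)"
  assumes "fst (snd (snd x)) $ k > -1"
  shows "((\<lambda>x. Ef c x / (1 + fst (snd (snd x)) $ k)) has_derivative blinfun_apply (Gb c x k)) (at x)"
proof -
  have d: "((\<lambda>x::(real \<times> (real^'d) \<times> (real^'k) \<times> real). 1 + fst (snd (snd x)) $ k) has_derivative (\<lambda>h. 0 + fst (snd (snd h)) $ k)) (at x)"
    by (intro has_derivative_add has_derivative_const bounded_linear.has_derivative[OF bl_P] has_derivative_ident)
  have ne: "1 + fst (snd (snd x)) $ k \<noteq> 0" using assms by auto
  show ?thesis using has_derivative_divide'[OF Ef_deriv d ne]
    by (rule has_derivative_eq_rhs)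
       (simp only: fun_eq_iff Gb_def blinfun.diff_left blinfun.scaleR_left lt_apply lpk_apply quot_aux[OF ne]; simp)
qed

lemma c_deriv: fixes x :: "(real \<times> (real^'d) \<times> (real^'k) \<times> real)"
  assumes "snd (snd (snd x)) > -1"
  shows "((\<lambda>x. Ef c x / (1 + snd (snd (snd x)))) has_derivative blinfun_apply (Gc c x)) (at x)"
proof -
  have d: "((\<lambda>x::(real \<times> (real^'d) \<times> (real^'k) \<times> real). 1 + snd (snd (snd x))) has_derivative (\<lambda>h. 0 + snd (snd (snd h)))) (at x)"
    by (intro has_derivative_add has_derivative_const bounded_linear.has_derivative[OF bl_M] has_derivative_ident)
  have ne: "1 + snd (snd (snd x)) \<noteq> 0" using assms by auto
  show ?thesis using has_derivative_divide'[OF Ef_deriv d ne]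
    by (rule has_derivative_eq_rhs)
       (simp only: fun_eq_iff Gc_def blinfun.diff_left blinfun.scaleR_left lt_apply lmm_apply quot_aux[OF ne]; simp)
qed

lemma Dphi_deriv: fixes x :: "(real \<times> (real^'d) \<times> (real^'k) \<times> real)"
  assumes "\<forall>k. fst (snd (snd x)) $ k > -1" "snd (snd (snd x)) > -1"
  shows "(Dphi c has_derivative blinfun_apply (D2phi c x)) (at x)"
proof -
  have "((\<lambda>x. (- (Ef c x * sf x)) *\<^sub>R lt + (\<Sum>k\<in>UNIV. (Ef c x / (1 + fst (snd (snd x)) $ k)) *\<^sub>R lpk k)
     + (Ef c x / (1 + snd (snd (snd x)))) *\<^sub>R lmm) has_derivative
     (\<lambda>h. blinfun_apply (rk1 (Ga c x) lt) h + (\<Sum>k\<in>UNIV. blinfun_apply (rk1 (Gb c x k) (lpk k)) h) + blinfun_apply (rk1 (Gc c x) lmm) h)) (at x)"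
    using assms
    by (intro has_derivative_add has_derivative_sum scaleR_rk1_deriv a_deriv b_deriv c_deriv) auto
  thus ?thesis unfolding Dphi_def[abs_def]
    by (rule has_derivative_eq_rhs) (simp add: fun_eq_iff D2phi_def blinfun.add_left blinfun.sum_left)
qed

lemma rk1_norm: "norm (rk1 a b) \<le> norm a * norm b"
proof (rule norm_blinfun_bound)
  show "0 \<le> norm a * norm b" by simp
  fix h
  have "norm (blinfun_apply (rk1 a b) h) = \<bar>blinfun_apply a h\<bar> * norm b" by simp
  also have "\<dots> \<le> (norm a * norm h) * norm b"
    by (intro mult_right_mono) (auto simp: norm_blinfun[of a h, simplified real_norm_def])
  finally show "norm (blinfun_apply (rk1 a b) h) \<le> norm a * norm b * norm h" by (simp add: ac_simps)
qed

lemma rk1_bl: "bounded_linear (\<lambda>a. rk1 a b)"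
  by (rule bounded_linear_intro[where K="norm b"]) (auto simp: rk1_add rk1_scaleR rk1_norm)

definition Oset :: "(real \<times> (real^'d) \<times> (real^'k) \<times> real) set" where
  "Oset = {x. (\<forall>k. fst (snd (snd x)) $ k > -1) \<and> snd (snd (snd x)) > -1}"

lemma open_Oset: "open Oset"
proof -
  have eq: "Oset = (\<Inter>k\<in>UNIV. {x::(real \<times> (real^'d) \<times> (real^'k) \<times> real). -1 < fst (snd (snd x)) $ k}) \<inter> {x. -1 < snd (snd (snd x))}"
    unfolding Oset_def by auto
  have o1: "open {x::(real \<times> (real^'d) \<times> (real^'k) \<times> real). -1 < fst (snd (snd x)) $ k}" for k
    by (intro open_Collect_less continuous_on_const bounded_linear.continuous_on[OF bl_P] continuous_on_id)
  have o2: "open {x::(real \<times> (real^'d) \<times> (real^'k) \<times> real). -1 < snd (snd (snd x))}"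
    by (intro open_Collect_less continuous_on_const bounded_linear.continuous_on[OF bl_M] continuous_on_id)
  have o3: "open (\<Inter>k\<in>UNIV. {x::(real \<times> (real^'d) \<times> (real^'k) \<times> real). -1 < fst (snd (snd x)) $ k})"
    by (rule open_INT) (simp_all add: o1)
  show ?thesis unfolding eq by (rule open_Int[OF o3 o2])
qed

lemma Oset_Pp[simp]: "x \<in> Oset \<Longrightarrow> 0 < 1 + fst (snd (snd x)) $ k"
proof -
  assume "x \<in> Oset"
  hence "-1 < fst (snd (snd x)) $ k" unfolding Oset_def by blast
  thus ?thesis by simp
qed
lemma Oset_P[simp]: "x \<in> Oset \<Longrightarrow> 1 + fst (snd (snd x)) $ k \<noteq> 0"
  by (metis Oset_Pp less_irrefl)
lemma Oset_Mp[simp]: "x \<in> Oset \<Longrightarrow> 0 < 1 + snd (snd (snd x))"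
  unfolding Oset_def by auto
lemma Oset_M[simp]: "x \<in> Oset \<Longrightarrow> 1 + snd (snd (snd x)) \<noteq> 0"
  by (metis Oset_Mp less_irrefl)

lemma Ef_cont: "continuous_on S (Ef c)"
  unfolding Ef_def[abs_def] by (intro continuous_on_exp continuous_on_diff continuous_on_const continuous_on_fst continuous_on_id)

lemma cP: "continuous_on S (\<lambda>x::(real \<times> (real^'d) \<times> (real^'k) \<times> real). 1 + fst (snd (snd x)) $ k)"
  by (intro continuous_on_add continuous_on_const bounded_linear.continuous_on[OF bl_P] continuous_on_id)
lemma cM: "continuous_on S (\<lambda>x::(real \<times> (real^'d) \<times> (real^'k) \<times> real). 1 + snd (snd (snd x)))"
  by (intro continuous_on_add continuous_on_const bounded_linear.continuous_on[OF bl_M] continuous_on_id)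

lemma sf_cont: "continuous_on Oset sf"
proof -
  have "continuous_on Oset (\<lambda>x::(real \<times> (real^'d) \<times> (real^'k) \<times> real). 1 + (\<Sum>k\<in>UNIV. ln (1 + fst (snd (snd x)) $ k)) + ln (1 + snd (snd (snd x))))"
    by (intro continuous_on_add continuous_on_const continuous_on_sum continuous_on_ln cP cM ballI Oset_P Oset_M)
  thus ?thesis unfolding sf_def[abs_def] .
qed


lemma D2phi_cont: "continuous_on Oset (D2phi c)"
proof -
  have cP1: "continuous_on Oset (\<lambda>x::(real \<times> (real^'d) \<times> (real^'k) \<times> real). Ef c x / (1 + fst (snd (snd x)) $ k))" for k
    by (intro continuous_on_divide Ef_cont cP ballI Oset_P)
  have cP2: "continuous_on Oset (\<lambda>x::(real \<times> (real^'d) \<times> (real^'k) \<times> real). Ef c x / (1 + fst (snd (snd x)) $ k)^2)" for k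
    by (intro continuous_on_divide Ef_cont cP continuous_on_power ballI power_not_zero Oset_P)
  have cM1: "continuous_on Oset (\<lambda>x::(real \<times> (real^'d) \<times> (real^'k) \<times> real). Ef c x / (1 + snd (snd (snd x))))"
    by (intro continuous_on_divide Ef_cont cM ballI Oset_M)
  have cM2: "continuous_on Oset (\<lambda>x::(real \<times> (real^'d) \<times> (real^'k) \<times> real). Ef c x / (1 + snd (snd (snd x)))^2)"
    by (intro continuous_on_divide Ef_cont cM continuous_on_power ballI power_not_zero Oset_M)
  have cS: "continuous_on Oset (\<lambda>x. Ef c x * sf x)"
    by (intro continuous_on_mult Ef_cont sf_cont)
  have ga: "continuous_on Oset (Ga c)"
    unfolding Ga_def[abs_def]
    by (intro continuous_on_diff continuous_on_scaleR continuous_on_sum continuous_on_const cP1 cM1 cS)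
  have gb: "continuous_on Oset (\<lambda>x. Gb c x k)" for k
    unfolding Gb_def
    by (intro continuous_on_diff continuous_on_scaleR continuous_on_minus continuous_on_const cP1 cP2)
  have gc: "continuous_on Oset (Gc c)"
    unfolding Gc_def[abs_def]
    by (intro continuous_on_diff continuous_on_scaleR continuous_on_minus continuous_on_const cM1 cM2)
  show ?thesis unfolding D2phi_def[abs_def]
    by (intro continuous_on_add continuous_on_sum bounded_linear.continuous_on[OF rk1_bl] ga gb gc)
qed



lemma sum_lin: "(\<Sum>k\<in>S. f k * (a k - xi * b k)) = (\<Sum>k\<in>S. f k * a k) - xi * (\<Sum>k\<in>S. f k * b k)"
  for f a b :: "_ \<Rightarrow> real"
  by (simp add: sum_subtractf sum_distrib_left right_diff_distrib mult.left_commute)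
lemma sum_lin1: "(\<Sum>k\<in>S. (a k - xi * b k)) = (\<Sum>k\<in>S. a k) - xi * (\<Sum>k\<in>S. b k)"
  for a b :: "_ \<Rightarrow> real"
  by (simp add: sum_subtractf sum_distrib_left)
lemma lin4: "- (a - x*b) - 1/2*(S1 - x*S2) - l*(c - x*d) - (T1 - x*T2) = (-a - 1/2*S1 - l*c - T1) - x*(-b - 1/2*S2 - l*d - T2)"
  for a b x S1 S2 l c d T1 T2 :: real by algebra
lemma Lop_lin: "Lop mu sig kap lam t z p m (\<lambda>w. q1 w - xi * q2 w) (\<lambda>w w'. A1 w w' - xi * A2 w w') u a e
   = Lop mu sig kap lam t z p m q1 A1 u a e - xi * Lop mu sig kap lam t z p m q2 A2 u a e"
  unfolding Lop_def sum_lin sum_lin1 by (rule lin4)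
lemma lin3: "P*(a1 - x*a2) - (1/2)*(S1 - x*S2) - l*(T1 - x*T2) = (P*a1 - (1/2)*S1 - l*T1) - x*(P*a2 - (1/2)*S2 - l*T2)"
  for P a1 a2 x S1 S2 l T1 T2 :: real by algebra
lemma Fop_lin: "Fop kap lam p m (\<lambda>w w'. A1 w w' - xi * A2 w w') a e
   = Fop kap lam p m A1 a e - xi * Fop kap lam p m A2 a e"
  unfolding Fop_def sum_lin by (rule lin3)
lemma hl: "b1^2*(-(c1 - x*c2) + (L1 - x*L2) + (F1 - x*F2)) = b1^2*(-c1+L1+F1) - x*(b1^2*(-c2+L2+F2))"
  for b1 c1 c2 x L1 L2 F1 F2 :: real by algebra
lemma Hop_lin: "Hop mu sig kap lam t z p m (\<lambda>w. q1 w - xi * q2 w) (\<lambda>w w'. A1 w w' - xi * A2 w w') (c1 - xi * c2) u b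
   = Hop mu sig kap lam t z p m q1 A1 c1 u b - xi * Hop mu sig kap lam t z p m q2 A2 c2 u b"
  unfolding Hop_def Let_def Lop_lin Fop_lin hl by simp

lemma Dphi_q: "(\<lambda>w. blinfun_apply (Dphi c (t, z, p, m)) (0, w)) = q0 (Ef c (t, z, p, m)) p m"
  by (simp add: fun_eq_iff Dphi_def q0_def blinfun.add_left blinfun.sum_left blinfun.scaleR_left blinfun.minus_left blinfun.diff_left)

lemma Dphi_c: "blinfun_apply (Dphi c (t, z, p, m)) (1, 0) = - (Ef c (t, z, p, m) * sf (t, z, p, m))"
  by (simp add: Dphi_def blinfun.add_left blinfun.sum_left blinfun.scaleR_left blinfun.minus_left blinfun.diff_left)

lemma D2phi_A: "(\<lambda>w w'. blinfun_apply (blinfun_apply (D2phi c (t, z, p, m)) (0, w)) (0, w')) = A0 (Ef c (t, z, p, m)) p m"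
  by (simp add: fun_eq_iff D2phi_def A0_def Gb_def Gc_def blinfun.add_left blinfun.sum_left blinfun.scaleR_left
      blinfun.minus_left blinfun.diff_left sum_negf algebra_simps)



theorem lemma1:
  fixes n i :: nat and T :: real and tg :: "nat \<Rightarrow> real"
    and U :: "(real^'d) set"
    and mu :: "real \<Rightarrow> real^'d \<Rightarrow> real^'d \<Rightarrow> real^'d"
    and sig :: "real \<Rightarrow> real^'d \<Rightarrow> real^'d \<Rightarrow> real^'d^'d"
    and v :: "real \<times> (real^'d) \<times> (real^'k) \<times> real \<Rightarrow> real"
    and \<xi> :: real
  assumes T_pos: "T > 0"
    and grid0: "tg 0 = 0" and gridn: "tg n = T"
    and grid_mono: "\<And>j. j < n \<Longrightarrow> tg j \<le> tg (Suc j)"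
    and i_lt: "i < n"
    and card_k: "CARD('k) = n - i"
    and U_compact: "compact U"
    and mu_cont: "continuous_on ({0..T} \<times> UNIV \<times> U) (\<lambda>(t, z, u). mu t z u)"
    and sig_cont: "continuous_on ({0..T} \<times> UNIV \<times> U) (\<lambda>(t, z, u). sig t z u)"
    and mu_lip: "\<exists>L. \<forall>t\<in>{0..T}. \<forall>u\<in>U. \<forall>z z'. norm (mu t z u - mu t z' u) \<le> L * norm (z - z')"
    and sig_lip: "\<exists>L. \<forall>t\<in>{0..T}. \<forall>u\<in>U. \<forall>z z'. norm (sig t z u - sig t z' u) \<le> L * norm (z - z')"
    and mu_growth: "\<exists>C. \<forall>t\<in>{0..T}. \<forall>u\<in>U. \<forall>z. norm (mu t z u) \<le> C * (1 + norm z)"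
    and sig_growth: "\<exists>C. \<forall>t\<in>{0..T}. \<forall>u\<in>U. \<forall>z. norm (sig t z u) \<le> C * (1 + norm z)"
    and v_lsc: "lsc_on (intD tg i) v"
    and v_super: "visc_sup_ge mu sig U (\<lambda>p. max 1 p) (\<lambda>m. max 1 m) (intD tg i) v 0"
    and xi_pos: "\<xi> > 0"
  shows "visc_sup_ge mu sig U (\<lambda>p. max 1 p) (\<lambda>m. max 1 m) (intD tg i)
           (\<lambda>x. v x + \<xi> * phi0 tg i x) (\<xi> / 8)"
proof -
  define c where "c = tg (Suc i)"
  show ?thesis
    unfolding visc_sup_ge_def
  proof (intro ballI allI impI)
    fix x0 :: "real \<times> (real^'d) \<times> (real^'k) \<times> real" and W \<phi> D\<phi> D2\<phi>
    assume x0: "x0 \<in> intD tg i"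
    assume H: "C2_on W \<phi> D\<phi> D2\<phi> \<and> intD tg i \<subseteq> W \<and> v x0 + \<xi> * phi0 tg i x0 - \<phi> x0 = 0 \<and>
        (\<forall>x\<in>intD tg i. v x0 + \<xi> * phi0 tg i x0 - \<phi> x0 \<le> v x + \<xi> * phi0 tg i x - \<phi> x)"
    obtain t z p m where x0eq: "x0 = (t, z, p, m)" by (cases x0) auto
    from x0 have tl: "t < tg (Suc i)" and pp: "\<forall>k. 0 < p $ k" and mpos: "0 < m"
      by (auto simp: intD_def x0eq)
    define W' where "W' = W \<inter> Oset"
    define \<psi> where "\<psi> = (\<lambda>x. \<phi> x - \<xi> * (Ef c x * sf x))"
    define D\<psi> where "D\<psi> = (\<lambda>x. D\<phi> x - \<xi> *\<^sub>R Dphi c x)"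
    define D2\<psi> where "D2\<psi> = (\<lambda>x. D2\<phi> x - \<xi> *\<^sub>R D2phi c x)"
    have C2W: "open W" "\<And>x. x \<in> W \<Longrightarrow> (\<phi> has_derivative blinfun_apply (D\<phi> x)) (at x)"
      "\<And>x. x \<in> W \<Longrightarrow> (D\<phi> has_derivative blinfun_apply (D2\<phi> x)) (at x)"
      "continuous_on W D2\<phi>"
      using H unfolding C2_on_def by auto
    have C2: "C2_on W' \<psi> D\<psi> D2\<psi>"
      unfolding C2_on_def
    proof (intro conjI ballI)
      show "open W'" using C2W(1) open_Oset unfolding W'_def by auto
      fix x assume "x \<in> W'"
      hence xW: "x \<in> W" and xO: "x \<in> Oset" by (auto simp: W'_def)
      have cond: "\<forall>k. fst (snd (snd x)) $ k > -1" "snd (snd (snd x)) > -1" using xO by (auto simp: Oset_def)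
      show "(\<psi> has_derivative blinfun_apply (D\<psi> x)) (at x)"
        unfolding \<psi>_def D\<psi>_def
        using has_derivative_diff[OF C2W(2)[OF xW] has_derivative_mult_right[OF phi_deriv[OF cond, of c], of \<xi>]]
        by (rule has_derivative_eq_rhs) (simp add: fun_eq_iff blinfun.diff_left blinfun.scaleR_left)
      show "(D\<psi> has_derivative blinfun_apply (D2\<psi> x)) (at x)"
        unfolding D\<psi>_def D2\<psi>_def
        using has_derivative_diff[OF C2W(3)[OF xW] has_derivative_scaleR_right[OF Dphi_deriv[OF cond, of c], of \<xi>]]
        by (rule has_derivative_eq_rhs) (simp add: fun_eq_iff blinfun.diff_left blinfun.scaleR_left)
    next
      have s1: "W' \<subseteq> W" "W' \<subseteq> Oset" by (auto simp: W'_def)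
      show "continuous_on W' D2\<psi>"
        unfolding D2\<psi>_def
        by (intro continuous_on_diff continuous_on_scaleR continuous_on_const
            continuous_on_subset[OF D2phi_cont s1(2)] continuous_on_subset[OF C2W(4) s1(1)])
    qed
    have Dom: "intD tg i \<subseteq> W'"
    proof
      fix x :: "real \<times> (real^'d) \<times> (real^'k) \<times> real" assume xD: "x \<in> intD tg i"
      hence "x \<in> W" using H by auto
      moreover have "x \<in> Oset"
      proof -
        obtain t' z' p' m' where xe: "x = (t', z', p', m')" by (cases x) auto
        have "\<forall>k. 0 < p' $ k" "0 < m'" using xD by (auto simp: intD_def xe)
        hence "\<forall>k. -1 < p' $ k" "-1 < m'" by (metis add_less_same_cancel1 add_neg_neg neg_less_0_iff_less zero_less_one less_trans)+
        thus ?thesis by (simp add: Oset_def xe)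
      qed
      ultimately show "x \<in> W'" by (simp add: W'_def)
    qed
    have e0: "v x0 - \<psi> x0 = 0" using H by (simp add: \<psi>_def phi0_eq c_def algebra_simps)
    have emin: "\<forall>x\<in>intD tg i. v x0 - \<psi> x0 \<le> v x - \<psi> x"
    proof
      fix x :: "real \<times> (real^'d) \<times> (real^'k) \<times> real" assume "x \<in> intD tg i"
      hence "v x0 + \<xi> * phi0 tg i x0 - \<phi> x0 \<le> v x + \<xi> * phi0 tg i x - \<phi> x" using H by blast
      thus "v x0 - \<psi> x0 \<le> v x - \<psi> x" unfolding \<psi>_def phi0_eq c_def by linarith
    qed
    have inst: "C2_on W' \<psi> D\<psi> D2\<psi> \<and> intD tg i \<subseteq> W' \<and> v x0 - \<psi> x0 = 0 \<and> (\<forall>x\<in>intD tg i. v x0 - \<psi> x0 \<le> v x - \<psi> x)"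
      using C2 Dom e0 emin by blast
    note sup0 = v_super[unfolded visc_sup_ge_def, THEN bspec, OF x0, THEN spec, THEN spec, THEN spec, THEN spec, THEN mp, OF inst]
    have fx: "fst x0 = t" "fst (snd x0) = z" "fst (snd (snd x0)) = p" "snd (snd (snd x0)) = m" by (simp_all add: x0eq)
    define S where "S = U \<times> sphere (0 :: (real \<times> ((real^'d)^'k) \<times> (real^'d))) 1"
    define G where "G ub = Hop mu sig (\<lambda>p. max 1 p) (\<lambda>m. max 1 m) t z p m (\<lambda>w. blinfun_apply (D\<psi> x0) (0, w)) (\<lambda>w w'. blinfun_apply (blinfun_apply (D2\<psi> x0) (0, w)) (0, w')) (blinfun_apply (D\<psi> x0) (1, 0)) (fst ub) (snd ub)" for ub
    define F where "F ub = Hop mu sig (\<lambda>p. max 1 p) (\<lambda>m. max 1 m) t z p m (\<lambda>w. blinfun_apply (D\<phi> x0) (0, w)) (\<lambda>w w'. blinfun_apply (blinfun_apply (D2\<phi> x0) (0, w)) (0, w')) (blinfun_apply (D\<phi> x0) (1, 0)) (fst ub) (snd ub)" for ub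
    define E0 where "E0 = Ef c (t, z, p, m)"
    define s0 where "s0 = sf (t, z, p, m)"
    have sup1: "ereal 0 \<le> (SUP ub\<in>S. ereal (G ub))"
      using sup0 unfolding fx S_def G_def .
    have E1: "1 \<le> E0" using tl unfolding E0_def Ef_def c_def by simp
    have s1: "1 \<le> s0"
    proof -
      have "0 \<le> (\<Sum>k\<in>UNIV. ln (1 + p $ k))" using pp by (intro sum_nonneg) (simp add: less_imp_le)
      moreover have "0 \<le> ln (1 + m)" using mpos by simp
      ultimately show ?thesis unfolding s0_def sf_def by simp
    qed
    have Dq: "blinfun_apply (Dphi c (t, z, p, m)) (0, w) = q0 E0 p m w" for w
      using Dphi_q[of c t z p m] unfolding E0_def fun_eq_iff by blast
    have DA: "blinfun_apply (blinfun_apply (D2phi c (t, z, p, m)) (0, w)) (0, w') = A0 E0 p m w w'" for w w'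
      using D2phi_A[of c t z p m] unfolding E0_def fun_eq_iff by blast
    have Dc: "blinfun_apply (Dphi c (t, z, p, m)) (1, 0) = - (E0 * s0)"
      using Dphi_c[of c t z p m] unfolding E0_def s0_def .
    have hq: "(\<lambda>w. blinfun_apply (D\<psi> x0) (0, w)) = (\<lambda>w. blinfun_apply (D\<phi> x0) (0, w) - \<xi> * q0 E0 p m w)"
      by (simp add: fun_eq_iff D\<psi>_def blinfun.diff_left blinfun.scaleR_left x0eq Dq)
    have hA: "(\<lambda>w w'. blinfun_apply (blinfun_apply (D2\<psi> x0) (0, w)) (0, w')) =
        (\<lambda>w w'. blinfun_apply (blinfun_apply (D2\<phi> x0) (0, w)) (0, w') - \<xi> * A0 E0 p m w w')"
      by (simp add: fun_eq_iff D2\<psi>_def blinfun.diff_left blinfun.scaleR_left x0eq DA)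
    have hc: "blinfun_apply (D\<psi> x0) (1, 0) = blinfun_apply (D\<phi> x0) (1, 0) - \<xi> * (- (E0 * s0))"
      by (simp add: D\<psi>_def blinfun.diff_left blinfun.scaleR_left x0eq Dc)
    have pt: "ereal (G ub) + ereal (\<xi> / 8) \<le> ereal (F ub)" if ub: "ub \<in> S" for ub
    proof -
      have "G ub = F ub - \<xi> * (Hop mu sig (\<lambda>p. max 1 p) (\<lambda>m. max 1 m) t z p m (q0 E0 p m) (A0 E0 p m) (- (E0 * s0)) (fst ub) (snd ub))"
        unfolding G_def F_def hq hA hc by (rule Hop_lin)
      moreover have nb: "norm (snd ub) = 1" using ub by (auto simp: S_def)
      have h8: "1/8 \<le> Hop mu sig (\<lambda>p. max 1 p) (\<lambda>m. max 1 m) t z p m (q0 E0 p m) (A0 E0 p m) (- (E0 * s0)) (fst ub) (snd ub)"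
        by (rule H0_bound[OF E1 s1 pp mpos nb])
      have "\<xi> * (1/8) \<le> \<xi> * (Hop mu sig (\<lambda>p. max 1 p) (\<lambda>m. max 1 m) t z p m (q0 E0 p m) (A0 E0 p m) (- (E0 * s0)) (fst ub) (snd ub))" using xi_pos by (intro mult_left_mono[OF h8]) auto
      ultimately have "G ub + \<xi> / 8 \<le> F ub" by simp
      thus ?thesis by simp
    qed
    have Sne: "S \<noteq> {}"
    proof
      assume "S = {}"
      with sup1 show False by (simp add: bot_ereal_def)
    qed
    have "ereal (\<xi> / 8) = ereal 0 + ereal (\<xi> / 8)" by simp
    also have "\<dots> \<le> (SUP ub\<in>S. ereal (G ub)) + ereal (\<xi> / 8)"
      by (rule add_right_mono[OF sup1])
    also have "\<dots> = (SUP ub\<in>S. ereal (G ub) + ereal (\<xi> / 8))"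
      by (rule SUP_ereal_add_left[OF Sne, symmetric]) simp
    also have "\<dots> \<le> (SUP ub\<in>S. ereal (F ub))"
      by (rule SUP_mono) (use pt in blast)
    finally have final: "ereal (\<xi> / 8) \<le> (SUP ub\<in>S. ereal (F ub))" .
    show "ereal (\<xi> / 8) \<le> (SUP ub\<in>U \<times> sphere 0 1. ereal (Hop mu sig (\<lambda>p. max 1 p) (\<lambda>m. max 1 m) (fst x0) (fst (snd x0)) (fst (snd (snd x0))) (snd (snd (snd x0)))
                    (\<lambda>w. blinfun_apply (D\<phi> x0) (0, w))
                    (\<lambda>w w'. blinfun_apply (blinfun_apply (D2\<phi> x0) (0, w)) (0, w'))
                    (blinfun_apply (D\<phi> x0) (1, 0))
                    (fst ub) (snd ub)))"
      using final unfolding fx S_def F_def .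
  qed
qed


end
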